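(* Let $N_\mathrm{t},N_\mathrm{r}\ge1$, let $\mathbf{H}\in\mathbb{C}^{N_\mathrm{r}\times N_\mathrm{t}}$ have i.i.d. $\mathcal{CN}(0,1)$ entries, and let $\check{\mathbf{x}}_1,\dots,\check{\mathbf{x}}_K$, $K=2^{N_\mathrm{t}}$, be the distinct elements of $\{-1,+1\}^{N_\mathrm{t}}$. Consider the noiseless one-bit model (the limit of infinite SNR): an index $k$ is drawn uniformly from $\{1,\dots,K\}$ independently of $\mathbf{H}$, the receiver observes $\mathbf{y}=\operatorname{sign}(\mathbf{H}\check{\mathbf{x}}_k)$, knows the true representative vectors $\check{\mathbf{y}}_m=\operatorname{sign}(\mathbf{H}\check{\mathbf{x}}_m)$, $m=1,\dots,K$, and outputs an index chosen uniformly at random among the minimizers of $m\mapsto\|\mathbf{y}-\check{\mathbf{y}}_m\|_2$. Let $P^{\mathrm{ver}}_{\rho\to\infty}$ be the probability that the output differs from $k$. Then $$P^{\mathrm{ver}}_{\rho\to\infty}\le\frac12\sum_{d=1}^{N_\mathrm{t}}\binom{N_\mathrm{t}}{d}\left[\frac{2}{\pi}\arctan\sqrt{\frac{N_\mathrm{t}-d}{d}}\right]^{2N_\mathrm{r}}.$$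
   Context: For real $a$, $\operatorname{sign}(a)=+1$ if $a\ge0$ and $-1$ if $a<0$; for complex $a$, $\operatorname{sign}(a)=\operatorname{sign}(\Re\{a\})+j\operatorname{sign}(\Im\{a\})$; on vectors it acts element-wise. *)

theory Defs
  imports "HOL-Probability.Probability"
begin

definition rsign :: "real \<Rightarrow> real" where
  "rsign a = (if a \<ge> 0 then 1 else -1)"

definition csign :: "complex \<Rightarrow> complex" where
  "csign z = Complex (rsign (Re z)) (rsign (Im z))"

definition CN01 :: "complex measure" where
  "CN01 = distr (density lborel (normal_density 0 (sqrt (1/2)))
                 \<Otimes>\<^sub>M density lborel (normal_density 0 (sqrt (1/2))))
               borel (\<lambda>(a, b). Complex a b)"

definition chan_measure :: "nat \<Rightarrow> nat \<Rightarrow> (nat \<times> nat \<Rightarrow> complex) measure" where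
  "chan_measure Nr Nt = PiM ({..<Nr} \<times> {..<Nt}) (\<lambda>_. CN01)"

definition bpsk_set :: "nat \<Rightarrow> (nat \<Rightarrow> real) set" where
  "bpsk_set Nt = {x. (\<forall>j<Nt. x j = 1 \<or> x j = -1) \<and> (\<forall>j\<ge>Nt. x j = 0)}"

definition onebit_out :: "nat \<Rightarrow> nat \<Rightarrow> (nat \<times> nat \<Rightarrow> complex) \<Rightarrow> (nat \<Rightarrow> real) \<Rightarrow> nat \<Rightarrow> complex" where
  "onebit_out Nr Nt H x = (\<lambda>i. csign (\<Sum>j<Nt. H (i, j) * of_real (x j)))"

definition vdist :: "nat \<Rightarrow> (nat \<Rightarrow> complex) \<Rightarrow> (nat \<Rightarrow> complex) \<Rightarrow> real" where
  "vdist Nr u v = sqrt (\<Sum>i<Nr. (cmod (u i - v i))\<^sup>2)"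

definition minimizers :: "nat \<Rightarrow> nat \<Rightarrow> (nat \<times> nat \<Rightarrow> complex) \<Rightarrow> (nat \<Rightarrow> complex) \<Rightarrow> (nat \<Rightarrow> real) set" where
  "minimizers Nr Nt H y = {m \<in> bpsk_set Nt. \<forall>m' \<in> bpsk_set Nt.
       vdist Nr y (onebit_out Nr Nt H m) \<le> vdist Nr y (onebit_out Nr Nt H m')}"

text \<open>Conditional probability (given H and true vector x) that the decoder, which
picks uniformly at random among the minimizers, outputs something other than x.\<close>
definition cond_err :: "nat \<Rightarrow> nat \<Rightarrow> (nat \<times> nat \<Rightarrow> complex) \<Rightarrow> (nat \<Rightarrow> real) \<Rightarrow> real" where
  "cond_err Nr Nt H x =
     (let A = minimizers Nr Nt H (onebit_out Nr Nt H x)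
      in 1 - (if x \<in> A then 1 / real (card A) else 0))"

definition P_ver_inf :: "nat \<Rightarrow> nat \<Rightarrow> ennreal" where
  "P_ver_inf Nr Nt = (\<integral>\<^sup>+ H. ennreal ((1 / real (card (bpsk_set Nt))) *
        (\<Sum>x\<in>bpsk_set Nt. cond_err Nr Nt H x)) \<partial>chan_measure Nr Nt)"

end

theory Submission
  imports Defs
begin


lemma half_gauss:
  fixes k :: real assumes k: "k > 0"
  shows "(\<integral>\<^sup>+x. ennreal (x * exp (- (k * x\<^sup>2) / 2)) * indicator {0..} x \<partial>lborel) = ennreal (1 / k)"
proof -
  have "(\<integral>\<^sup>+x. ennreal (x * exp (- (k * x\<^sup>2) / 2)) * indicator {0..} x \<partial>lborel) = 0 - (- exp (- (k * 0\<^sup>2) / 2) / k)"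
  proof (rule nn_integral_FTC_atLeast)
    show "((\<lambda>x::real. - exp (- (k * x\<^sup>2) / 2) / k) \<longlongrightarrow> 0) at_top"
    proof -
      have "((\<lambda>x::real. - exp (- (k * x\<^sup>2) / 2) / k) \<longlongrightarrow> - 0 / k) at_top"
        apply (intro tendsto_divide tendsto_minus filterlim_compose[OF exp_at_bot])
        apply (simp_all add: k)
        apply (rule filterlim_compose[OF filterlim_uminus_at_bot_at_top])
      proof -
        have e: "(\<lambda>x::real. k * x\<^sup>2 / 2) = (\<lambda>x. (k/2) * x^2)" by auto
        show "LIM x at_top. k * x\<^sup>2 / 2 :> at_top" unfolding e
          by (rule filterlim_tendsto_pos_mult_at_top[OF tendsto_const])
             (use k in \<open>auto intro!: filterlim_pow_at_top filterlim_ident\<close>)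
        show "k \<noteq> 0" using k by simp
      qed
      then show ?thesis by simp
    qed
  qed (use k in \<open>auto intro!: derivative_eq_intros simp: field_simps\<close>)
  then show ?thesis by simp
qed

lemma full_gauss:
  fixes k :: real assumes k: "k > 0"
  shows "(\<integral>\<^sup>+x. ennreal (\<bar>x\<bar> * exp (- (k * x\<^sup>2) / 2)) \<partial>lborel) = ennreal (2 / k)"
proof -
  let ?f = "\<lambda>x::real. ennreal (\<bar>x\<bar> * exp (- (k * x\<^sup>2) / 2))"
  have h: "(\<integral>\<^sup>+x. ?f x * indicator {0..} x \<partial>lborel) = ennreal (1 / k)"
  proof -
    have "(\<integral>\<^sup>+x. ?f x * indicator {0..} x \<partial>lborel) = (\<integral>\<^sup>+x. ennreal (x * exp (- (k * x\<^sup>2) / 2)) * indicator {0..} x \<partial>lborel)"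
      by (intro nn_integral_cong) (auto split: split_indicator)
    then show ?thesis using half_gauss[OF k] by simp
  qed
  have "(\<integral>\<^sup>+x. ?f x \<partial>lborel) = (\<integral>\<^sup>+x. ?f x * indicator {0..} x + ?f x * indicator {..<0} x \<partial>lborel)"
    by (intro nn_integral_cong) (auto split: split_indicator)
  also have "\<dots> = (\<integral>\<^sup>+x. ?f x * indicator {0..} x \<partial>lborel) + (\<integral>\<^sup>+x. ?f x * indicator {..<0} x \<partial>lborel)"
    by (rule nn_integral_add) auto
  also have "(\<integral>\<^sup>+x. ?f x * indicator {..<0} x \<partial>lborel) = ennreal \<bar>-1::real\<bar> * (\<integral>\<^sup>+x. ?f (0 + -1 * x) * indicator {..<0} (0 + -1 * x) \<partial>lborel)"
    by (rule nn_integral_real_affine) auto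
  also have "\<dots> = (\<integral>\<^sup>+x. ?f x * indicator {0..} x \<partial>lborel)"
    by (simp, intro nn_integral_cong) (auto split: split_indicator)
  finally show ?thesis using h k by (simp add: ennreal_plus[symmetric] del: ennreal_plus)
qed

lemma arctan_int:
  fixes c :: real assumes c: "c \<ge> 0"
  shows "(\<integral>\<^sup>+s. ennreal (2 / (1 + s\<^sup>2)) * indicator {-c..c} s \<partial>lborel) = ennreal (4 * arctan c)"
proof -
  have "(\<integral>\<^sup>+s. ennreal (2 / (1 + s\<^sup>2)) * indicator {-c..c} s \<partial>lborel) = ennreal (2 * arctan c - 2 * arctan (-c))"
    by (rule nn_integral_FTC_Icc[where F="\<lambda>x. 2 * arctan x"])
       (use c in \<open>auto intro!: derivative_eq_intros simp: field_simps add_pos_nonneg\<close>)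
  then show ?thesis by (simp add: arctan_minus)
qed

lemma core_int:
  fixes c :: real assumes c: "c \<ge> 0"
  shows "(\<integral>\<^sup>+x. \<integral>\<^sup>+y. ennreal (exp (- (x\<^sup>2 + y\<^sup>2) / 2)) * indicator {-(c*\<bar>x\<bar>)..c*\<bar>x\<bar>} y \<partial>lborel \<partial>lborel)
         = ennreal (4 * arctan c)"
proof -
  let ?F = "\<lambda>x s. ennreal (\<bar>x\<bar> * exp (- ((1 + s\<^sup>2) * x\<^sup>2) / 2)) * indicator {-c..c} s"
  have inner: "(\<integral>\<^sup>+y. ennreal (exp (- (x\<^sup>2 + y\<^sup>2) / 2)) * indicator {-(c*\<bar>x\<bar>)..c*\<bar>x\<bar>} y \<partial>lborel)
      = (\<integral>\<^sup>+s. ?F x s \<partial>lborel)" if x: "x \<noteq> 0" for x :: real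
  proof -
    have "(\<integral>\<^sup>+y. ennreal (exp (- (x\<^sup>2 + y\<^sup>2) / 2)) * indicator {-(c*\<bar>x\<bar>)..c*\<bar>x\<bar>} y \<partial>lborel)
       = ennreal \<bar>x\<bar> * (\<integral>\<^sup>+s. ennreal (exp (- (x\<^sup>2 + (0 + x * s)\<^sup>2) / 2)) * indicator {-(c*\<bar>x\<bar>)..c*\<bar>x\<bar>} (0 + x * s) \<partial>lborel)"
      by (rule nn_integral_real_affine) (use x in auto)
    also have "\<dots> = (\<integral>\<^sup>+s. ennreal \<bar>x\<bar> * (ennreal (exp (- (x\<^sup>2 + (0 + x * s)\<^sup>2) / 2)) * indicator {-(c*\<bar>x\<bar>)..c*\<bar>x\<bar>} (0 + x * s)) \<partial>lborel)"
      by (rule nn_integral_cmult[symmetric]) auto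
    also have "\<dots> = (\<integral>\<^sup>+s. ?F x s \<partial>lborel)"
    proof (intro nn_integral_cong)
      fix s :: real
      have e1: "(-(c*\<bar>x\<bar>) \<le> x * s \<and> x * s \<le> c*\<bar>x\<bar>) = (-c \<le> s \<and> s \<le> c)"
      proof -
        have "\<bar>x * s\<bar> \<le> c * \<bar>x\<bar> \<longleftrightarrow> \<bar>s\<bar> \<le> c" using x by (simp add: abs_mult mult.commute)
        then show ?thesis using abs_le_iff[of "x * s" "c * \<bar>x\<bar>"] abs_le_iff[of "s" "c"] by auto
      qed
      have e2: "x\<^sup>2 + (0 + x * s)\<^sup>2 = (1 + s\<^sup>2) * x\<^sup>2" by (simp add: algebra_simps power2_eq_square)
      show "ennreal \<bar>x\<bar> * (ennreal (exp (- (x\<^sup>2 + (0 + x * s)\<^sup>2) / 2)) * indicator {-(c*\<bar>x\<bar>)..c*\<bar>x\<bar>} (0 + x * s)) = ?F x s"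
        unfolding e2 using e1 by (auto simp: indicator_def ennreal_mult[symmetric])
    qed
    finally show ?thesis .
  qed
  have "(\<integral>\<^sup>+x. \<integral>\<^sup>+y. ennreal (exp (- (x\<^sup>2 + y\<^sup>2) / 2)) * indicator {-(c*\<bar>x\<bar>)..c*\<bar>x\<bar>} y \<partial>lborel \<partial>lborel)
     = (\<integral>\<^sup>+x. \<integral>\<^sup>+s. ?F x s \<partial>lborel \<partial>lborel)"
  proof (rule nn_integral_cong_AE)
    show "AE x in lborel. (\<integral>\<^sup>+y. ennreal (exp (- (x\<^sup>2 + y\<^sup>2) / 2)) * indicator {-(c*\<bar>x\<bar>)..c*\<bar>x\<bar>} y \<partial>lborel) = (\<integral>\<^sup>+s. ?F x s \<partial>lborel)"
      by (rule AE_I[where N="{0}"]) (use inner in \<open>auto\<close>)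
  qed
  also have "\<dots> = (\<integral>\<^sup>+s. \<integral>\<^sup>+x. ?F x s \<partial>lborel \<partial>lborel)"
    by (rule lborel_pair.Fubini') simp
  also have "\<dots> = (\<integral>\<^sup>+s. ennreal (2 / (1 + s\<^sup>2)) * indicator {-c..c} s \<partial>lborel)"
  proof (intro nn_integral_cong)
    fix s :: real
    have k: "1 + s\<^sup>2 > 0" by (simp add: add_pos_nonneg)
    have "(\<integral>\<^sup>+x. ?F x s \<partial>lborel) = (\<integral>\<^sup>+x. ennreal (\<bar>x\<bar> * exp (- ((1 + s\<^sup>2) * x\<^sup>2) / 2)) \<partial>lborel) * indicator {-c..c} s"
      by (rule nn_integral_multc) auto
    also have "\<dots> = ennreal (2 / (1 + s\<^sup>2)) * indicator {-c..c} s"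
      using full_gauss[OF k] by simp
    finally show "(\<integral>\<^sup>+x. ?F x s \<partial>lborel) = ennreal (2 / (1 + s\<^sup>2)) * indicator {-c..c} s" .
  qed
  also have "\<dots> = ennreal (4 * arctan c)" by (rule arctan_int[OF c])
  finally show ?thesis .
qed

lemma pred_interval_abs[measurable]:
  "Measurable.pred (borel \<Otimes>\<^sub>M borel) (\<lambda>z::real\<times>real. snd z \<in> {-(c*\<bar>fst z\<bar>)..c*\<bar>fst z\<bar>})"
  unfolding atLeastAtMost_iff by measurable

lemma (in prob_space) std_ratio:
  fixes X Y :: "'a \<Rightarrow> real" and c :: real
  assumes ind: "indep_var lborel X lborel Y"
    and DX: "distributed M lborel X std_normal_density"
    and DY: "distributed M lborel Y std_normal_density"
    and c: "c \<ge> 0"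
  shows "emeasure M {\<omega>\<in>space M. \<bar>Y \<omega>\<bar> \<le> c * \<bar>X \<omega>\<bar>} = ennreal ((2/pi) * arctan c)"
proof -
  have sf: "sigma_finite_measure lborel" ..
  have J: "distributed M (lborel \<Otimes>\<^sub>M lborel) (\<lambda>\<omega>. (X \<omega>, Y \<omega>))
      (\<lambda>(x, y). ennreal (std_normal_density x) * ennreal (std_normal_density y))"
    by (rule distributed_joint_indep[OF sf sf DX DY ind])
  let ?A = "{z::real\<times>real. \<bar>snd z\<bar> \<le> c * \<bar>fst z\<bar>}"
  have A: "?A \<in> sets (lborel \<Otimes>\<^sub>M lborel)"
  proof -
    have "?A = {z\<in>space (lborel \<Otimes>\<^sub>M lborel). \<bar>snd z\<bar> \<le> c * \<bar>fst z\<bar>}" by (simp add: space_pair_measure)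
    also have "\<dots> \<in> sets (lborel \<Otimes>\<^sub>M lborel)" by measurable
    finally show ?thesis .
  qed
  have "{\<omega>\<in>space M. \<bar>Y \<omega>\<bar> \<le> c * \<bar>X \<omega>\<bar>} = (\<lambda>\<omega>. (X \<omega>, Y \<omega>)) -` ?A \<inter> space M" by auto
  then have "emeasure M {\<omega>\<in>space M. \<bar>Y \<omega>\<bar> \<le> c * \<bar>X \<omega>\<bar>} =
     (\<integral>\<^sup>+z. (\<lambda>(x, y). ennreal (std_normal_density x) * ennreal (std_normal_density y)) z * indicator ?A z \<partial>(lborel \<Otimes>\<^sub>M lborel))"
    using distributed_emeasure[OF J A] by simp
  also have "\<dots> = (\<integral>\<^sup>+x. \<integral>\<^sup>+y. ennreal (std_normal_density x) * ennreal (std_normal_density y) * indicator ?A (x, y) \<partial>lborel \<partial>lborel)"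
    by (rule lborel.nn_integral_fst[symmetric, where f="\<lambda>z. (\<lambda>(x, y). ennreal (std_normal_density x) * ennreal (std_normal_density y)) z * indicator ?A z", simplified]) measurable
  also have "\<dots> = (\<integral>\<^sup>+x. \<integral>\<^sup>+y. ennreal (1 / (2*pi)) * (ennreal (exp (- (x\<^sup>2 + y\<^sup>2) / 2)) * indicator {-(c*\<bar>x\<bar>)..c*\<bar>x\<bar>} y) \<partial>lborel \<partial>lborel)"
  proof (intro nn_integral_cong)
    fix x y :: real
    have e: "std_normal_density x * std_normal_density y = 1 / (2*pi) * exp (- (x\<^sup>2 + y\<^sup>2) / 2)"
      by (simp add: std_normal_density_def mult_exp_exp field_simps real_sqrt_mult[symmetric])
    have i: "indicator ?A (x, y) = (indicator {-(c*\<bar>x\<bar>)..c*\<bar>x\<bar>} y :: ennreal)"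
      by (auto simp: indicator_def abs_le_iff)
    show "ennreal (std_normal_density x) * ennreal (std_normal_density y) * indicator ?A (x, y) =
          ennreal (1 / (2*pi)) * (ennreal (exp (- (x\<^sup>2 + y\<^sup>2) / 2)) * indicator {-(c*\<bar>x\<bar>)..c*\<bar>x\<bar>} y)"
    proof -
      have "ennreal (std_normal_density x) * ennreal (std_normal_density y) = ennreal (std_normal_density x * std_normal_density y)"
        by (rule ennreal_mult[symmetric]) auto
      also have "\<dots> = ennreal (1 / (2*pi)) * ennreal (exp (- (x\<^sup>2 + y\<^sup>2) / 2))"
        unfolding e by (rule ennreal_mult) auto
      finally show ?thesis unfolding i by (simp add: mult.assoc)
    qed
  qed
  also have "\<dots> = (\<integral>\<^sup>+x. ennreal (1 / (2*pi)) * \<integral>\<^sup>+y. ennreal (exp (- (x\<^sup>2 + y\<^sup>2) / 2)) * indicator {-(c*\<bar>x\<bar>)..c*\<bar>x\<bar>} y \<partial>lborel \<partial>lborel)"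
    by (intro nn_integral_cong nn_integral_cmult) measurable
  also have "\<dots> = ennreal (1 / (2*pi)) * (\<integral>\<^sup>+x. \<integral>\<^sup>+y. ennreal (exp (- (x\<^sup>2 + y\<^sup>2) / 2)) * indicator {-(c*\<bar>x\<bar>)..c*\<bar>x\<bar>} y \<partial>lborel \<partial>lborel)"
    by (rule nn_integral_cmult) measurable
  also have "\<dots> = ennreal (1 / (2*pi)) * ennreal (4 * arctan c)" by (subst core_int[OF c]) (rule refl)
  also have "\<dots> = ennreal ((2/pi) * arctan c)"
  proof -
    have "0 \<le> arctan c" using c arctan_le_iff[of 0 c] by simp
    then show ?thesis by (simp add: ennreal_mult[symmetric] field_simps)
  qed
  finally show ?thesis .
qed

lemma (in prob_space) ratio_gen:
  fixes U V :: "'a \<Rightarrow> real"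
  assumes ind: "indep_var lborel U lborel V"
    and DU: "distributed M lborel U (normal_density 0 a)"
    and DV: "distributed M lborel V (normal_density 0 b)"
    and a: "a > 0" and b: "b > 0"
  shows "emeasure M {\<omega>\<in>space M. \<bar>V \<omega>\<bar> \<le> \<bar>U \<omega>\<bar>} = ennreal ((2/pi) * arctan (a/b))"
proof -
  have DX: "distributed M lborel (\<lambda>\<omega>. (U \<omega> - 0) / a) std_normal_density"
    using DU normal_standard_normal_convert[OF a] by simp
  have DY: "distributed M lborel (\<lambda>\<omega>. (V \<omega> - 0) / b) std_normal_density"
    using DV normal_standard_normal_convert[OF b] by simp
  have ind': "indep_var lborel ((\<lambda>u. (u - 0) / a) \<circ> U) lborel ((\<lambda>u. (u - 0) / b) \<circ> V)"
    by (rule indep_var_compose[OF ind]) auto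
  have "emeasure M {\<omega>\<in>space M. \<bar>(V \<omega> - 0) / b\<bar> \<le> (a / b) * \<bar>(U \<omega> - 0) / a\<bar>} = ennreal ((2/pi) * arctan (a/b))"
    by (rule std_ratio[OF ind'[unfolded comp_def] DX DY]) (use a b in simp)
  moreover have "{\<omega>\<in>space M. \<bar>(V \<omega> - 0) / b\<bar> \<le> (a / b) * \<bar>(U \<omega> - 0) / a\<bar>} = {\<omega>\<in>space M. \<bar>V \<omega>\<bar> \<le> \<bar>U \<omega>\<bar>}"
    using a b by (auto simp: abs_divide divide_le_cancel)
  ultimately show ?thesis by simp
qed

lemma (in prob_space) zero_gen:
  fixes V :: "'a \<Rightarrow> real"
  assumes DV: "distributed M lborel V (normal_density 0 b)"
  shows "emeasure M {\<omega>\<in>space M. \<bar>V \<omega>\<bar> \<le> 0} = 0"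
proof -
  have "{\<omega>\<in>space M. \<bar>V \<omega>\<bar> \<le> 0} = V -` {0} \<inter> space M" by auto
  then have "emeasure M {\<omega>\<in>space M. \<bar>V \<omega>\<bar> \<le> 0} = (\<integral>\<^sup>+x. ennreal (normal_density 0 b x) * indicator {0} x \<partial>lborel)"
    using distributed_emeasure[OF DV, of "{0}"] by simp
  also have "\<dots> = (\<integral>\<^sup>+(x::real). 0 \<partial>lborel)"
  proof (rule nn_integral_cong_AE)
    show "AE x in lborel. ennreal (normal_density 0 b x) * indicator {0} x = 0"
      by (rule AE_I[where N="{0}"]) (auto split: split_indicator)
  qed
  finally show ?thesis by simp
qed



lemma prob_space_normal: "0 < \<sigma> \<Longrightarrow> prob_space (density lborel (\<lambda>x. ennreal (normal_density \<mu> \<sigma> x)))"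
  by (rule prob_space_normal_density)

lemma indep_coords:
  assumes P: "prob_space N" and T: "T \<noteq> {}"
  shows "prob_space.indep_vars (PiM T (\<lambda>_. N)) (\<lambda>_. N) (\<lambda>t \<omega>. \<omega> t) T"
proof -
  interpret G: prob_space "PiM T (\<lambda>_. N)" by (intro prob_space_PiM P)
  have "distr (PiM T (\<lambda>_. N)) (PiM T (\<lambda>_. N)) (\<lambda>\<omega>. \<lambda>t\<in>T. \<omega> t) = distr (PiM T (\<lambda>_. N)) (PiM T (\<lambda>_. N)) (\<lambda>\<omega>. \<omega>)"
    by (intro distr_cong) (auto simp: space_PiM PiE_def extensional_restrict)
  also have "\<dots> = PiM T (\<lambda>_. N)" by (rule distr_id)
  also have "\<dots> = PiM T (\<lambda>t. distr (PiM T (\<lambda>_. N)) N (\<lambda>\<omega>. \<omega> t))"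
    by (intro PiM_cong refl distr_PiM_component[symmetric] P) 
  finally show ?thesis
    by (subst G.indep_vars_iff_distr_eq_PiM'[OF T]) auto
qed

lemma indep_blocks:
  assumes P: "prob_space N" and T: "T \<noteq> {}"
    and K: "\<And>l. l \<in> L \<Longrightarrow> K l \<subseteq> T" and dj: "disjoint_family_on K L"
    and g: "\<And>l. l \<in> L \<Longrightarrow> g l \<in> measurable (PiM (K l) (\<lambda>_. N)) (Mo l)"
  shows "prob_space.indep_vars (PiM T (\<lambda>_. N)) Mo (\<lambda>l \<omega>. g l (restrict \<omega> (K l))) L"
proof -
  interpret G: prob_space "PiM T (\<lambda>_. N)" by (intro prob_space_PiM P)
  have "G.indep_vars (\<lambda>l. PiM (K l) (\<lambda>_. N)) (\<lambda>l \<omega>. restrict (\<lambda>t. \<omega> t) (K l)) L"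
    by (rule G.indep_vars_restrict[OF indep_coords[OF P T] K dj])
  from G.indep_vars_compose2[OF this g] show ?thesis by simp
qed

lemma indep_two_blocks:
  assumes P: "prob_space N" and T: "T \<noteq> {}"
    and AB: "A \<inter> B = {}" "A \<subseteq> T" "B \<subseteq> T"
    and f: "f \<in> measurable (PiM A (\<lambda>_. N)) Mf" and g: "g \<in> measurable (PiM B (\<lambda>_. N)) Mg"
  shows "prob_space.indep_var (PiM T (\<lambda>_. N)) Mf (\<lambda>\<omega>. f (restrict \<omega> A)) Mg (\<lambda>\<omega>. g (restrict \<omega> B))"
proof -
  interpret G: prob_space "PiM T (\<lambda>_. N)" by (intro prob_space_PiM P)
  have "G.indep_var (PiM A (\<lambda>_. N)) (\<lambda>\<omega>. restrict (\<lambda>t. \<omega> t) A) (PiM B (\<lambda>_. N)) (\<lambda>\<omega>. restrict (\<lambda>t. \<omega> t) B)"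
    by (rule G.indep_var_restrict[OF indep_coords[OF P T] AB])
  from G.indep_var_compose[OF this f g] show ?thesis by (simp add: comp_def)
qed

definition NN :: "real measure" where
  "NN = density lborel (\<lambda>x. ennreal (normal_density 0 (sqrt (1/2)) x))"

lemma prob_space_NN: "prob_space NN" unfolding NN_def by (rule prob_space_normal) simp

lemma sets_NN[measurable_cong, simp]: "sets NN = sets borel" by (simp add: NN_def)

lemma Complex_measurable[measurable]: "(\<lambda>(a, b). Complex a b) \<in> borel_measurable (borel \<Otimes>\<^sub>M borel)"
  unfolding Complex_eq[abs_def] by measurable

lemma CN01_distr:
  assumes T: "T \<noteq> {}" and t: "t0 \<in> T" "t1 \<in> T" "t0 \<noteq> t1"
  shows "distr (PiM T (\<lambda>_. NN)) borel (\<lambda>\<omega>. Complex (\<omega> t0) (\<omega> t1)) = CN01"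
proof -
  interpret G: prob_space "PiM T (\<lambda>_. NN)" by (intro prob_space_PiM prob_space_NN)
  have ind: "G.indep_var NN (\<lambda>\<omega>. (\<lambda>f. f t0) (restrict \<omega> {t0})) NN (\<lambda>\<omega>. (\<lambda>f. f t1) (restrict \<omega> {t1}))"
    by (rule indep_two_blocks[OF prob_space_NN T]) (use t in auto)
  then have ind': "G.indep_var NN (\<lambda>\<omega>. \<omega> t0) NN (\<lambda>\<omega>. \<omega> t1)" by simp
  have c0: "distr (PiM T (\<lambda>_. NN)) NN (\<lambda>\<omega>. \<omega> t0) = NN"
    by (rule distr_PiM_component) (use t prob_space_NN in auto)
  have c1: "distr (PiM T (\<lambda>_. NN)) NN (\<lambda>\<omega>. \<omega> t1) = NN"
    by (rule distr_PiM_component) (use t prob_space_NN in auto)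
  have pair: "NN \<Otimes>\<^sub>M NN = distr (PiM T (\<lambda>_. NN)) (NN \<Otimes>\<^sub>M NN) (\<lambda>\<omega>. (\<omega> t0, \<omega> t1))"
    using ind' unfolding G.indep_var_distribution_eq c0 c1 by simp
  have "CN01 = distr (NN \<Otimes>\<^sub>M NN) borel (\<lambda>(a, b). Complex a b)"
    unfolding CN01_def NN_def by simp
  also have "\<dots> = distr (PiM T (\<lambda>_. NN)) borel ((\<lambda>(a, b). Complex a b) \<circ> (\<lambda>\<omega>. (\<omega> t0, \<omega> t1)))"
    by (subst pair, rule distr_distr) (use t in \<open>auto\<close>)
  finally show ?thesis by (simp add: comp_def)
qed



definition TT :: "nat \<Rightarrow> nat \<Rightarrow> (nat \<times> nat \<times> bool) set" where
  "TT Nr Nt = {..<Nr} \<times> {..<Nt} \<times> UNIV"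

definition GG :: "nat \<Rightarrow> nat \<Rightarrow> (nat \<times> nat \<times> bool \<Rightarrow> real) measure" where
  "GG Nr Nt = PiM (TT Nr Nt) (\<lambda>_. NN)"

definition Phi :: "nat \<Rightarrow> nat \<Rightarrow> (nat \<times> nat \<times> bool \<Rightarrow> real) \<Rightarrow> (nat \<times> nat \<Rightarrow> complex)" where
  "Phi Nr Nt \<omega> = (\<lambda>k\<in>{..<Nr} \<times> {..<Nt}. Complex (\<omega> (fst k, snd k, False)) (\<omega> (fst k, snd k, True)))"

lemma prob_space_GG: "prob_space (GG Nr Nt)"
  unfolding GG_def by (intro prob_space_PiM prob_space_NN)

lemma comp_NN: "t \<in> K \<Longrightarrow> (\<lambda>f. f t) \<in> borel_measurable (PiM K (\<lambda>_. NN))"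
  using measurable_component_singleton[of t K "\<lambda>_. NN"] measurable_cong_sets[OF refl sets_NN, of "PiM K (\<lambda>_. NN)"]
  by simp

lemma chan_eq:
  assumes "Nr \<ge> 1" "Nt \<ge> 1"
  shows "chan_measure Nr Nt = distr (GG Nr Nt) (PiM ({..<Nr} \<times> {..<Nt}) (\<lambda>_. borel)) (Phi Nr Nt)"
proof -
  let ?L = "{..<Nr} \<times> {..<Nt}"
  let ?T = "TT Nr Nt"
  let ?K = "\<lambda>k::nat\<times>nat. {(fst k, snd k, False), (fst k, snd k, True)}"
  let ?g = "\<lambda>k::nat\<times>nat. \<lambda>f. Complex (f (fst k, snd k, False)) (f (fst k, snd k, True))"
  interpret G: prob_space "GG Nr Nt" by (rule prob_space_GG)
  have T: "?T \<noteq> {}" using assms by (auto simp: TT_def lessThan_empty_iff)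
  have "G.indep_vars (\<lambda>_. borel) (\<lambda>l \<omega>. ?g l (restrict \<omega> (?K l))) ?L"
    unfolding GG_def
  proof (rule indep_blocks[OF prob_space_NN T])
    show "\<And>l. l \<in> ?L \<Longrightarrow> ?K l \<subseteq> ?T" by (auto simp: TT_def)
    show "disjoint_family_on ?K ?L" by (auto simp: disjoint_family_on_def)
    show "?g l \<in> borel_measurable (PiM (?K l) (\<lambda>_. NN))" if "l \<in> ?L" for l
    proof -
      have "(\<lambda>f. (f (fst l, snd l, False), f (fst l, snd l, True))) \<in> measurable (PiM (?K l) (\<lambda>_. NN)) (borel \<Otimes>\<^sub>M borel)"
        by (intro measurable_Pair) (auto intro!: comp_NN)
      from measurable_comp[OF this Complex_measurable] show ?thesis by (simp add: comp_def)
    qed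
  qed
  then have ind: "G.indep_vars (\<lambda>_. borel) (\<lambda>l \<omega>. ?g l \<omega>) ?L"
    by (rule G.indep_vars_cong[THEN iffD1, rotated -1]) auto
  have rv: "G.random_variable borel (?g l)" if "l \<in> ?L" for l
    using ind that unfolding G.indep_vars_def by (cases l) simp
  have "distr (GG Nr Nt) (PiM ?L (\<lambda>_. borel)) (\<lambda>\<omega>. \<lambda>l\<in>?L. ?g l \<omega>) = PiM ?L (\<lambda>l. distr (GG Nr Nt) borel (?g l))"
    using G.indep_vars_iff_distr_eq_PiM'[where I="?L" and M'="\<lambda>_. borel" and X="\<lambda>l \<omega>. ?g l \<omega>"] ind rv T by (auto simp: TT_def)
  also have "\<dots> = PiM ?L (\<lambda>_. CN01)"
  proof (rule PiM_cong)
    fix l assume l: "l \<in> ?L"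
    show "distr (GG Nr Nt) borel (?g l) = CN01"
      unfolding GG_def by (rule CN01_distr[OF T]) (use l in \<open>auto simp: TT_def\<close>)
  qed simp
  finally show ?thesis unfolding chan_measure_def Phi_def by simp
qed



lemma TT_ne: "Nr \<ge> 1 \<Longrightarrow> Nt \<ge> 1 \<Longrightarrow> TT Nr Nt \<noteq> {}"
  by (auto simp: TT_def lessThan_empty_iff)

lemma coord_distributed:
  assumes "t \<in> T"
  shows "distributed (PiM T (\<lambda>_. NN)) lborel (\<lambda>\<omega>. \<omega> t) (normal_density 0 (sqrt (1/2)))"
proof -
  have "distr (PiM T (\<lambda>_. NN)) lborel (\<lambda>\<omega>. \<omega> t) = distr (PiM T (\<lambda>_. NN)) NN (\<lambda>\<omega>. \<omega> t)"
    by (rule distr_cong) auto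
  also have "\<dots> = NN" by (rule distr_PiM_component) (use assms prob_space_NN in auto)
  finally have e: "distr (PiM T (\<lambda>_. NN)) lborel (\<lambda>\<omega>. \<omega> t) = NN" .
  show ?thesis
    unfolding distributed_def using e comp_NN[OF assms] by (simp add: NN_def)
qed

lemma row_sum_normal:
  assumes Nr: "Nr \<ge> 1" and Nt: "Nt \<ge> 1" and i: "i < Nr"
    and J0: "J0 \<subseteq> {..<Nt}" "J0 \<noteq> {}"
    and s: "\<And>j. j \<in> J0 \<Longrightarrow> s j = 1 \<or> s j = -1"
  shows "distributed (GG Nr Nt) lborel (\<lambda>\<omega>. \<Sum>j\<in>J0. \<omega> (i, j, b) * s j)
           (normal_density 0 (sqrt (real (card J0) / 2)))"
proof -
  interpret G: prob_space "GG Nr Nt" by (rule prob_space_GG)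
  have fin: "finite J0" using J0 finite_subset by blast
  have "G.indep_vars (\<lambda>_. borel) (\<lambda>j \<omega>. (\<lambda>f. f (i, j, b) * s j) (restrict \<omega> {(i, j, b)})) J0"
    unfolding GG_def
  proof (rule indep_blocks[OF prob_space_NN TT_ne[OF Nr Nt]])
    show "\<And>l. l \<in> J0 \<Longrightarrow> {(i, l, b)} \<subseteq> TT Nr Nt" using J0 i by (auto simp: TT_def)
    show "disjoint_family_on (\<lambda>j. {(i, j, b)}) J0" by (auto simp: disjoint_family_on_def)
    show "(\<lambda>f. f (i, l, b) * s l) \<in> borel_measurable (PiM {(i, l, b)} (\<lambda>_. NN))" for l
      by (intro borel_measurable_times comp_NN) auto
  qed
  then have ind: "G.indep_vars (\<lambda>_. borel) (\<lambda>j \<omega>. \<omega> (i, j, b) * s j) J0" by simp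
  have D: "distributed (GG Nr Nt) lborel (\<lambda>\<omega>. \<omega> (i, j, b) * s j) (normal_density 0 (sqrt (1/2)))"
    if j: "j \<in> J0" for j
  proof -
    have c: "distributed (GG Nr Nt) lborel (\<lambda>\<omega>. \<omega> (i, j, b)) (normal_density 0 (sqrt (1/2)))"
      unfolding GG_def by (rule coord_distributed) (use J0 i j in \<open>auto simp: TT_def\<close>)
    have "s j \<noteq> 0" "\<bar>s j\<bar> = 1" using s[OF j] by auto
    from G.normal_density_affine[OF c _ this(1), of 0] this(2)
    show ?thesis by (simp add: mult.commute)
  qed
  have "distributed (GG Nr Nt) lborel (\<lambda>\<omega>. \<Sum>j\<in>J0. \<omega> (i, j, b) * s j)
      (normal_density (\<Sum>j\<in>J0. 0) (sqrt (\<Sum>j\<in>J0. (sqrt (1/2))\<^sup>2)))"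
    by (rule G.sum_indep_normal[OF fin J0(2) ind]) (auto intro: D)
  then show ?thesis by simp
qed

lemma row_bound:
  assumes Nr: "Nr \<ge> 1" and Nt: "Nt \<ge> 1" and i: "i < Nr"
    and x: "x \<in> bpsk_set Nt" and m: "m \<in> bpsk_set Nt" and xm: "x \<noteq> m"
  shows "emeasure (GG Nr Nt) {\<omega>\<in>space (GG Nr Nt). rsign (\<Sum>j<Nt. \<omega> (i, j, b) * x j) = rsign (\<Sum>j<Nt. \<omega> (i, j, b) * m j)}
    \<le> ennreal ((2/pi) * arctan (sqrt ((real Nt - real (card {j. j < Nt \<and> x j \<noteq> m j})) / real (card {j. j < Nt \<and> x j \<noteq> m j}))))"
proof -
  interpret G: prob_space "GG Nr Nt" by (rule prob_space_GG)
  define S where "S = {j. j < Nt \<and> x j = m j}"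
  define D where "D = {j. j < Nt \<and> x j \<noteq> m j}"
  define d where "d = card D"
  define U where "U = (\<lambda>\<omega>::nat\<times>nat\<times>bool\<Rightarrow>real. \<Sum>j\<in>S. \<omega> (i, j, b) * x j)"
  define V where "V = (\<lambda>\<omega>::nat\<times>nat\<times>bool\<Rightarrow>real. \<Sum>j\<in>D. \<omega> (i, j, b) * x j)"
  have xv: "\<And>j. j < Nt \<Longrightarrow> x j = 1 \<or> x j = -1" "\<And>j. j \<ge> Nt \<Longrightarrow> x j = 0"
    using x by (auto simp: bpsk_set_def)
  have mv: "\<And>j. j < Nt \<Longrightarrow> m j = 1 \<or> m j = -1" "\<And>j. j \<ge> Nt \<Longrightarrow> m j = 0"
    using m by (auto simp: bpsk_set_def)
  have SD: "{..<Nt} = S \<union> D" "S \<inter> D = {}" "S \<subseteq> {..<Nt}" "D \<subseteq> {..<Nt}"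
    by (auto simp: S_def D_def)
  have finS: "finite S" and finD: "finite D" using SD finite_subset by blast+
  have Dne: "D \<noteq> {}"
  proof
    assume "D = {}"
    then have "\<forall>j. x j = m j" using xv(2) mv(2) by (auto simp: D_def) (metis not_le)
    then show False using xm by auto
  qed
  have mD: "\<And>j. j \<in> D \<Longrightarrow> m j = - x j" using xv mv by (force simp: D_def)
  have mS: "\<And>j. j \<in> S \<Longrightarrow> m j = x j" by (auto simp: S_def)
  have sumx: "(\<Sum>j<Nt. \<omega> (i, j, b) * x j) = U \<omega> + V \<omega>" for \<omega>
    unfolding U_def V_def SD(1) by (rule sum.union_disjoint[OF finS finD SD(2)])
  have summ: "(\<Sum>j<Nt. \<omega> (i, j, b) * m j) = U \<omega> - V \<omega>" for \<omega>
  proof -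
    have "(\<Sum>j<Nt. \<omega> (i, j, b) * m j) = (\<Sum>j\<in>S. \<omega> (i, j, b) * m j) + (\<Sum>j\<in>D. \<omega> (i, j, b) * m j)"
      unfolding SD(1) by (rule sum.union_disjoint[OF finS finD SD(2)])
    also have "(\<Sum>j\<in>S. \<omega> (i, j, b) * m j) = U \<omega>" unfolding U_def by (intro sum.cong) (auto simp: mS)
    also have "(\<Sum>j\<in>D. \<omega> (i, j, b) * m j) = - V \<omega>" unfolding V_def by (simp add: mD sum_negf[symmetric])
    finally show ?thesis by simp
  qed
  have sub: "{\<omega>\<in>space (GG Nr Nt). rsign (\<Sum>j<Nt. \<omega> (i, j, b) * x j) = rsign (\<Sum>j<Nt. \<omega> (i, j, b) * m j)}
      \<subseteq> {\<omega>\<in>space (GG Nr Nt). \<bar>V \<omega>\<bar> \<le> \<bar>U \<omega>\<bar>}"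
    unfolding sumx summ by (auto simp: rsign_def split: if_splits)
  have DV: "distributed (GG Nr Nt) lborel V (normal_density 0 (sqrt (real d / 2)))"
    unfolding V_def d_def by (rule row_sum_normal[OF Nr Nt i SD(4) Dne]) (use xv SD in auto)
  have pos: "0 \<le> (2/pi) * arctan (sqrt ((real Nt - real d) / real d))"
  proof -
    have "real d \<le> real Nt" unfolding d_def using card_mono[OF _ SD(4)] by simp
    then have "0 \<le> sqrt ((real Nt - real d) / real d)" by simp
    then show ?thesis using arctan_le_iff[of 0] by simp
  qed
  have "emeasure (GG Nr Nt) {\<omega>\<in>space (GG Nr Nt). \<bar>V \<omega>\<bar> \<le> \<bar>U \<omega>\<bar>}
      \<le> ennreal ((2/pi) * arctan (sqrt ((real Nt - real d) / real d)))"
  proof (cases "S = {}")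
    case True
    then have "U = (\<lambda>_. 0)" by (simp add: U_def)
    then show ?thesis using G.zero_gen[OF DV] by simp
  next
    case False
    have DU: "distributed (GG Nr Nt) lborel U (normal_density 0 (sqrt (real (card S) / 2)))"
      unfolding U_def by (rule row_sum_normal[OF Nr Nt i SD(3) False]) (use xv SD in auto)
    let ?A = "(\<lambda>j. (i, j, b)) ` S" and ?B = "(\<lambda>j. (i, j, b)) ` D"
    have "G.indep_var lborel (\<lambda>\<omega>. (\<lambda>f. \<Sum>j\<in>S. f (i, j, b) * x j) (restrict \<omega> ?A))
                      lborel (\<lambda>\<omega>. (\<lambda>f. \<Sum>j\<in>D. f (i, j, b) * x j) (restrict \<omega> ?B))"
      unfolding GG_def
    proof (rule indep_two_blocks[OF prob_space_NN TT_ne[OF Nr Nt]])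
      show "?A \<inter> ?B = {}" using SD(2) by auto
      show "?A \<subseteq> TT Nr Nt" "?B \<subseteq> TT Nr Nt" using SD i by (auto simp: TT_def)
      show "(\<lambda>f. \<Sum>j\<in>S. f (i, j, b) * x j) \<in> measurable (PiM ?A (\<lambda>_. NN)) lborel"
        by (simp only: measurable_lborel1) (intro borel_measurable_sum borel_measurable_times comp_NN, auto)
      show "(\<lambda>f. \<Sum>j\<in>D. f (i, j, b) * x j) \<in> measurable (PiM ?B (\<lambda>_. NN)) lborel"
        by (simp only: measurable_lborel1) (intro borel_measurable_sum borel_measurable_times comp_NN, auto)
    qed
    moreover have "(\<lambda>\<omega>. (\<lambda>f. \<Sum>j\<in>S. f (i, j, b) * x j) (restrict \<omega> ?A)) = U"
      unfolding U_def by (intro ext sum.cong) auto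
    moreover have "(\<lambda>\<omega>. (\<lambda>f. \<Sum>j\<in>D. f (i, j, b) * x j) (restrict \<omega> ?B)) = V"
      unfolding V_def by (intro ext sum.cong) auto
    ultimately have ind: "G.indep_var lborel U lborel V" by simp
    have dpos: "real d > 0" using Dne finD by (simp add: d_def card_gt_0_iff)
    have cS: "real (card S) = real Nt - real d"
    proof -
      have "card (S \<union> D) = Nt" unfolding SD(1)[symmetric] by simp
      then have "card S + card D = Nt" using card_Un_disjoint[OF finS finD SD(2)] by simp
      then show ?thesis unfolding d_def by simp
    qed
    have cpos: "real (card S) > 0" using False finS by (simp add: card_gt_0_iff)
    have "emeasure (GG Nr Nt) {\<omega>\<in>space (GG Nr Nt). \<bar>V \<omega>\<bar> \<le> \<bar>U \<omega>\<bar>}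
        = ennreal ((2/pi) * arctan (sqrt (real (card S) / 2) / sqrt (real d / 2)))"
      by (rule G.ratio_gen[OF ind DU DV]) (use dpos cpos in auto)
    also have "sqrt (real (card S) / 2) / sqrt (real d / 2) = sqrt ((real Nt - real d) / real d)"
      using dpos by (simp add: real_sqrt_divide[symmetric] cS field_simps)
    finally show ?thesis by simp
  qed
  moreover have "emeasure (GG Nr Nt) {\<omega>\<in>space (GG Nr Nt). rsign (\<Sum>j<Nt. \<omega> (i, j, b) * x j) = rsign (\<Sum>j<Nt. \<omega> (i, j, b) * m j)}
      \<le> emeasure (GG Nr Nt) {\<omega>\<in>space (GG Nr Nt). \<bar>V \<omega>\<bar> \<le> \<bar>U \<omega>\<bar>}"
  proof (rule emeasure_mono[OF sub])
    have mU[measurable]: "U \<in> borel_measurable (GG Nr Nt)" unfolding U_def GG_def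
      by (intro borel_measurable_sum borel_measurable_times comp_NN) (use SD i in \<open>auto simp: TT_def\<close>)
    have mV[measurable]: "V \<in> borel_measurable (GG Nr Nt)" unfolding V_def GG_def
      by (intro borel_measurable_sum borel_measurable_times comp_NN) (use SD i in \<open>auto simp: TT_def\<close>)
    show "{\<omega>\<in>space (GG Nr Nt). \<bar>V \<omega>\<bar> \<le> \<bar>U \<omega>\<bar>} \<in> sets (GG Nr Nt)" by measurable
  qed
  ultimately show ?thesis unfolding d_def D_def by simp
qed



lemma rsign_meas[measurable]: "rsign \<in> borel_measurable borel"
  unfolding rsign_def[abs_def] by measurable

lemma rsign_eq_iff: "rsign a = rsign b \<longleftrightarrow> (0 \<le> a \<longleftrightarrow> 0 \<le> b)"
  by (simp add: rsign_def)

lemma sets_CN01[measurable_cong, simp]: "sets CN01 = sets borel" by (simp add: CN01_def)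

lemma comp_chan: "(i, j) \<in> {..<Nr} \<times> {..<Nt} \<Longrightarrow> (\<lambda>H. H (i, j)) \<in> borel_measurable (chan_measure Nr Nt)"
  unfolding chan_measure_def
  using measurable_component_singleton[of "(i,j)" "{..<Nr} \<times> {..<Nt}" "\<lambda>_. CN01"]
    measurable_cong_sets[OF refl sets_CN01, of "PiM ({..<Nr} \<times> {..<Nt}) (\<lambda>_. CN01)"]
  by simp

lemma csign_eq: "csign z = csign w \<longleftrightarrow> rsign (Re z) = rsign (Re w) \<and> rsign (Im z) = rsign (Im w)"
  by (simp add: csign_def complex_eq_iff)

definition Ev :: "nat \<Rightarrow> nat \<Rightarrow> (nat \<Rightarrow> real) \<Rightarrow> (nat \<Rightarrow> real) \<Rightarrow> (nat \<times> nat \<Rightarrow> complex) set" where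
  "Ev Nr Nt x m = {H \<in> space (chan_measure Nr Nt). \<forall>i<Nr. onebit_out Nr Nt H x i = onebit_out Nr Nt H m i}"

lemma onebit_eq_iff:
  "onebit_out Nr Nt H x i = onebit_out Nr Nt H m i \<longleftrightarrow>
    rsign (\<Sum>j<Nt. Re (H (i, j)) * x j) = rsign (\<Sum>j<Nt. Re (H (i, j)) * m j) \<and>
    rsign (\<Sum>j<Nt. Im (H (i, j)) * x j) = rsign (\<Sum>j<Nt. Im (H (i, j)) * m j)"
  by (simp add: onebit_out_def csign_eq)

lemma Ev_sets:
  assumes "Nr \<ge> 1"
  shows "Ev Nr Nt x m \<in> sets (chan_measure Nr Nt)"
proof -
  let ?M = "chan_measure Nr Nt"
  have "Ev Nr Nt x m = (\<Inter>i\<in>{..<Nr}. {H \<in> space ?M.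
    rsign (\<Sum>j<Nt. Re (H (i, j)) * x j) = rsign (\<Sum>j<Nt. Re (H (i, j)) * m j) \<and>
    rsign (\<Sum>j<Nt. Im (H (i, j)) * x j) = rsign (\<Sum>j<Nt. Im (H (i, j)) * m j)})"
    using assms by (auto simp: Ev_def onebit_eq_iff) (metis Suc_le_lessD lessThan_iff)
  also have "\<dots> \<in> sets ?M"
  proof (rule sets.finite_INT)
    show "{..<Nr} \<noteq> {}" using assms by (auto simp: lessThan_empty_iff)
    fix i assume i: "i \<in> {..<Nr}"
    have c: "(\<lambda>H. H (i, j)) \<in> borel_measurable ?M" if "j < Nt" for j
      by (rule comp_chan) (use i that in auto)
    have [measurable]: "(\<lambda>H. \<Sum>j<Nt. Re (H (i, j)) * y j) \<in> borel_measurable ?M" for y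
      by (intro borel_measurable_sum borel_measurable_times borel_measurable_const
          measurable_compose[OF c borel_measurable_Re]) auto
    have [measurable]: "(\<lambda>H. \<Sum>j<Nt. Im (H (i, j)) * y j) \<in> borel_measurable ?M" for y
      by (intro borel_measurable_sum borel_measurable_times borel_measurable_const
          measurable_compose[OF c borel_measurable_Im]) auto
    show "{H \<in> space ?M.
      rsign (\<Sum>j<Nt. Re (H (i, j)) * x j) = rsign (\<Sum>j<Nt. Re (H (i, j)) * m j) \<and>
      rsign (\<Sum>j<Nt. Im (H (i, j)) * x j) = rsign (\<Sum>j<Nt. Im (H (i, j)) * m j)} \<in> sets ?M"
      unfolding rsign_eq_iff by measurable
  qed simp
  finally show ?thesis .
qed

lemma Phi_meas:
  "Phi Nr Nt \<in> measurable (GG Nr Nt) (PiM ({..<Nr} \<times> {..<Nt}) (\<lambda>_. borel))"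
  unfolding Phi_def
proof (rule measurable_restrict)
  fix k assume k: "k \<in> {..<Nr} \<times> {..<Nt}"
  have "(\<lambda>\<omega>. (\<omega> (fst k, snd k, False), \<omega> (fst k, snd k, True))) \<in> measurable (GG Nr Nt) (borel \<Otimes>\<^sub>M borel)"
    unfolding GG_def by (intro measurable_Pair comp_NN) (use k in \<open>auto simp: TT_def\<close>)
  from measurable_comp[OF this Complex_measurable]
  show "(\<lambda>\<omega>. Complex (\<omega> (fst k, snd k, False)) (\<omega> (fst k, snd k, True))) \<in> borel_measurable (GG Nr Nt)"
    by (simp add: comp_def)
qed

lemma Ev_bound:
  assumes Nr: "Nr \<ge> 1" and Nt: "Nt \<ge> 1"
    and x: "x \<in> bpsk_set Nt" and m: "m \<in> bpsk_set Nt" and xm: "x \<noteq> m"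
  shows "emeasure (chan_measure Nr Nt) (Ev Nr Nt x m)
    \<le> ennreal (((2/pi) * arctan (sqrt ((real Nt - real (card {j. j < Nt \<and> x j \<noteq> m j})) / real (card {j. j < Nt \<and> x j \<noteq> m j})))) ^ (2 * Nr))"
proof -
  interpret G: prob_space "GG Nr Nt" by (rule prob_space_GG)
  define p where "p = (2/pi) * arctan (sqrt ((real Nt - real (card {j. j < Nt \<and> x j \<noteq> m j})) / real (card {j. j < Nt \<and> x j \<noteq> m j})))"
  have p0: "0 \<le> p"
  proof -
    have "card {j. j < Nt \<and> x j \<noteq> m j} \<le> card {..<Nt}" by (rule card_mono) auto
    then have "0 \<le> sqrt ((real Nt - real (card {j. j < Nt \<and> x j \<noteq> m j})) / real (card {j. j < Nt \<and> x j \<noteq> m j}))"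
      by simp
    then show ?thesis unfolding p_def using arctan_le_iff[of 0] by simp
  qed
  let ?L = "{..<Nr} \<times> {..<Nt}"
  let ?Mt = "PiM ?L (\<lambda>_. borel) :: (nat \<times> nat \<Rightarrow> complex) measure"
  define R where "R = (\<lambda>i b (\<omega>::nat\<times>nat\<times>bool\<Rightarrow>real). rsign (\<Sum>j<Nt. \<omega> (i, j, b) * x j) = rsign (\<Sum>j<Nt. \<omega> (i, j, b) * m j))"
  define F where "F = {\<omega>\<in>space (GG Nr Nt). \<forall>i<Nr. \<forall>b. R i b \<omega>}"
  have ch: "chan_measure Nr Nt = distr (GG Nr Nt) ?Mt (Phi Nr Nt)" by (rule chan_eq[OF Nr Nt])
  have EvS: "Ev Nr Nt x m \<in> sets ?Mt"
    using Ev_sets[OF Nr, of Nt x m] unfolding ch by simp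
  have "emeasure (chan_measure Nr Nt) (Ev Nr Nt x m) = emeasure (GG Nr Nt) (Phi Nr Nt -` Ev Nr Nt x m \<inter> space (GG Nr Nt))"
    unfolding ch by (rule emeasure_distr[OF Phi_meas EvS])
  also have "Phi Nr Nt -` Ev Nr Nt x m \<inter> space (GG Nr Nt) = F"
  proof -
    have sp: "Phi Nr Nt \<omega> \<in> space (chan_measure Nr Nt)" if "\<omega> \<in> space (GG Nr Nt)" for \<omega>
      using measurable_space[OF Phi_meas that] unfolding ch by simp
    have eq: "(\<forall>i<Nr. onebit_out Nr Nt (Phi Nr Nt \<omega>) x i = onebit_out Nr Nt (Phi Nr Nt \<omega>) m i) \<longleftrightarrow> (\<forall>i<Nr. \<forall>b. R i b \<omega>)" for \<omega>
    proof -
      have *: "onebit_out Nr Nt (Phi Nr Nt \<omega>) x i = onebit_out Nr Nt (Phi Nr Nt \<omega>) m i \<longleftrightarrow> R i False \<omega> \<and> R i True \<omega>"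
        if i: "i < Nr" for i
      proof -
        have re: "(\<Sum>j<Nt. Re (Phi Nr Nt \<omega> (i, j)) * y j) = (\<Sum>j<Nt. \<omega> (i, j, False) * y j)" for y
          by (intro sum.cong) (use i in \<open>auto simp: Phi_def\<close>)
        have im: "(\<Sum>j<Nt. Im (Phi Nr Nt \<omega> (i, j)) * y j) = (\<Sum>j<Nt. \<omega> (i, j, True) * y j)" for y
          by (intro sum.cong) (use i in \<open>auto simp: Phi_def\<close>)
        show ?thesis unfolding onebit_eq_iff re im R_def ..
      qed
      have **: "(\<forall>b. R i b \<omega>) \<longleftrightarrow> R i False \<omega> \<and> R i True \<omega>" for i by (metis (full_types))
      show ?thesis using * ** by auto
    qed
    show ?thesis unfolding F_def Ev_def using sp eq by auto
  qed
  also have "emeasure (GG Nr Nt) F = ennreal (G.prob F)" by (rule G.emeasure_eq_measure)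
  also have "G.prob F \<le> p ^ (2 * Nr)"
  proof -
    let ?J = "{..<Nr} \<times> (UNIV :: bool set)"
    let ?K = "\<lambda>l::nat\<times>bool. (\<lambda>j. (fst l, j, snd l)) ` {..<Nt}"
    let ?g = "\<lambda>l::nat\<times>bool. \<lambda>f::nat\<times>nat\<times>bool\<Rightarrow>real. rsign (\<Sum>j<Nt. f (fst l, j, snd l) * x j) = rsign (\<Sum>j<Nt. f (fst l, j, snd l) * m j)"
    have ind: "G.indep_vars (\<lambda>_. count_space UNIV) (\<lambda>l \<omega>. ?g l (restrict \<omega> (?K l))) ?J"
      unfolding GG_def
    proof (rule indep_blocks[OF prob_space_NN TT_ne[OF Nr Nt]])
      show "\<And>l. l \<in> ?J \<Longrightarrow> ?K l \<subseteq> TT Nr Nt" by (auto simp: TT_def)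
      show "disjoint_family_on ?K ?J" by (auto simp: disjoint_family_on_def)
      fix l assume l: "l \<in> ?J"
      have c: "(\<lambda>f. f (fst l, j, snd l)) \<in> borel_measurable (PiM (?K l) (\<lambda>_. NN))" if "j < Nt" for j
        by (rule comp_NN) (use that in auto)
      have [measurable]: "(\<lambda>f. \<Sum>j<Nt. f (fst l, j, snd l) * y j) \<in> borel_measurable (PiM (?K l) (\<lambda>_. NN))" for y
        by (intro borel_measurable_sum borel_measurable_times borel_measurable_const c) auto
      show "?g l \<in> measurable (PiM (?K l) (\<lambda>_. NN)) (count_space UNIV)"
        unfolding rsign_eq_iff by measurable
    qed
    have pre: "(\<lambda>\<omega>. ?g l (restrict \<omega> (?K l))) -` {True} \<inter> space (GG Nr Nt) = {\<omega>\<in>space (GG Nr Nt). R (fst l) (snd l) \<omega>}" for l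
    proof -
      have "?g l (restrict \<omega> (?K l)) = R (fst l) (snd l) \<omega>" for \<omega>
      proof -
        have "(\<Sum>j<Nt. restrict \<omega> (?K l) (fst l, j, snd l) * y j) = (\<Sum>j<Nt. \<omega> (fst l, j, snd l) * y j)" for y
          by (intro sum.cong) auto
        then show ?thesis unfolding R_def by simp
      qed
      then show ?thesis by auto
    qed
    have Jne: "?J \<noteq> {}" using Nr by (auto simp: lessThan_empty_iff)
    have "F = (\<Inter>l\<in>?J. (\<lambda>\<omega>. ?g l (restrict \<omega> (?K l))) -` {True} \<inter> space (GG Nr Nt))"
      unfolding pre F_def using Jne by auto
    then have "G.prob F = (\<Prod>l\<in>?J. G.prob ((\<lambda>\<omega>. ?g l (restrict \<omega> (?K l))) -` {True} \<inter> space (GG Nr Nt)))"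
      using G.indep_varsD[OF ind Jne] by simp
    also have "\<dots> = (\<Prod>l\<in>?J. G.prob {\<omega>\<in>space (GG Nr Nt). R (fst l) (snd l) \<omega>})"
      unfolding pre ..
    also have "\<dots> \<le> (\<Prod>l\<in>?J. p)"
    proof (rule prod_mono)
      fix l assume l: "l \<in> ?J"
      have "emeasure (GG Nr Nt) {\<omega>\<in>space (GG Nr Nt). R (fst l) (snd l) \<omega>} \<le> ennreal p"
        unfolding R_def p_def by (rule row_bound[OF Nr Nt _ x m xm]) (use l in auto)
      then have "G.prob {\<omega>\<in>space (GG Nr Nt). R (fst l) (snd l) \<omega>} \<le> p"
        using p0 by (simp add: G.emeasure_eq_measure)
      then show "0 \<le> G.prob {\<omega>\<in>space (GG Nr Nt). R (fst l) (snd l) \<omega>} \<and> G.prob {\<omega>\<in>space (GG Nr Nt). R (fst l) (snd l) \<omega>} \<le> p"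
        by simp
    qed
    also have "\<dots> = p ^ (2 * Nr)" by (simp add: card_cartesian_product mult.commute)
    finally show ?thesis .
  qed
  finally show ?thesis unfolding p_def by (simp add: ennreal_leI)
qed



lemma diff_bij:
  assumes x: "x \<in> bpsk_set Nt"
  shows "bij_betw (\<lambda>m. {j. j < Nt \<and> x j \<noteq> m j}) (bpsk_set Nt - {x}) (Pow {..<Nt} - {{}})"
proof -
  have xv: "\<And>j. j < Nt \<Longrightarrow> x j = 1 \<or> x j = -1" "\<And>j. j \<ge> Nt \<Longrightarrow> x j = 0"
    using x by (auto simp: bpsk_set_def)
  have h1: "\<forall>m\<in>bpsk_set Nt - {x}. (\<lambda>j. if j \<in> {j. j < Nt \<and> x j \<noteq> m j} then - x j else x j) = m"
  proof (intro ballI)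
    fix m assume m: "m \<in> bpsk_set Nt - {x}"
    have mv: "\<And>j. j < Nt \<Longrightarrow> m j = 1 \<or> m j = -1" "\<And>j. j \<ge> Nt \<Longrightarrow> m j = 0"
      using m by (auto simp: bpsk_set_def)
    show "(\<lambda>j. if j \<in> {j. j < Nt \<and> x j \<noteq> m j} then - x j else x j) = m"
    proof
      fix j show "(if j \<in> {j. j < Nt \<and> x j \<noteq> m j} then - x j else x j) = m j"
        using xv[of j] mv[of j] by (cases "j < Nt") auto
    qed
  qed
  have nz: "\<And>j. j < Nt \<Longrightarrow> x j \<noteq> - x j" using xv(1) by fastforce
  have ex: "\<exists>j<Nt. x j \<noteq> m j" if m: "m \<in> bpsk_set Nt" "m \<noteq> x" for m
  proof (rule ccontr)
    assume "\<not> (\<exists>j<Nt. x j \<noteq> m j)"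
    then have "x j = m j" for j
      using m xv(2)[of j] by (cases "j < Nt") (auto simp: bpsk_set_def)
    then show False using m by auto
  qed
  have h2: "\<forall>S\<in>Pow {..<Nt} - {{}}. {j. j < Nt \<and> x j \<noteq> (if j \<in> S then - x j else x j)} = S"
    using nz by auto
  have h3: "(\<lambda>m. {j. j < Nt \<and> x j \<noteq> m j}) ` (bpsk_set Nt - {x}) \<subseteq> Pow {..<Nt} - {{}}"
    using ex by blast
  have h4: "(\<lambda>S j. if j \<in> S then - x j else x j) ` (Pow {..<Nt} - {{}}) \<subseteq> bpsk_set Nt - {x}"
  proof (intro image_subsetI)
    fix S assume S: "S \<in> Pow {..<Nt} - {{}}"
    have "(\<lambda>j. if j \<in> S then - x j else x j) \<in> bpsk_set Nt"
      using xv S by (auto simp: bpsk_set_def)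
    moreover have "(\<lambda>j. if j \<in> S then - x j else x j) \<noteq> x"
    proof
      assume eq: "(\<lambda>j. if j \<in> S then - x j else x j) = x"
      from S obtain j where j: "j \<in> S" by auto
      have "- x j = x j" using fun_cong[OF eq, of j] j by simp
      then show False using nz[of j] S j by auto
    qed
    ultimately show "(\<lambda>j. if j \<in> S then - x j else x j) \<in> bpsk_set Nt - {x}" by simp
  qed
  show ?thesis by (rule bij_betw_byWitness[OF h1 h2 h3 h4])
qed

lemma count_sum:
  fixes f :: "nat \<Rightarrow> real"
  assumes x: "x \<in> bpsk_set Nt"
  shows "(\<Sum>m\<in>bpsk_set Nt - {x}. f (card {j. j < Nt \<and> x j \<noteq> m j})) = (\<Sum>d=1..Nt. real (Nt choose d) * f d)"
proof -
  let ?P = "Pow {..<Nt} - {{}}"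
  have "(\<Sum>m\<in>bpsk_set Nt - {x}. f (card {j. j < Nt \<and> x j \<noteq> m j})) = (\<Sum>S\<in>?P. f (card S))"
    by (rule sum.reindex_bij_betw[OF diff_bij[OF x], of "\<lambda>S. f (card S)"])
  also have "\<dots> = (\<Sum>d\<in>{1..Nt}. \<Sum>S\<in>{S. S \<in> ?P \<and> card S = d}. f (card S))"
  proof (rule sum.group[symmetric])
    show "finite ?P" by simp
    show "finite {1..Nt}" by simp
    show "card ` ?P \<subseteq> {1..Nt}"
    proof
      fix k assume "k \<in> card ` ?P"
      then obtain S where S: "S \<subseteq> {..<Nt}" "S \<noteq> {}" "k = card S" by auto
      have "finite S" using S(1) finite_subset by blast
      then have "card S \<ge> 1" using S(2) by (simp add: Suc_le_eq card_gt_0_iff)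
      moreover have "card S \<le> Nt" using card_mono[OF _ S(1)] by simp
      ultimately show "k \<in> {1..Nt}" using S(3) by simp
    qed
  qed
  also have "\<dots> = (\<Sum>d=1..Nt. real (Nt choose d) * f d)"
  proof (rule sum.cong[OF refl])
    fix d assume d: "d \<in> {1..Nt}"
    have eq: "{S. S \<in> ?P \<and> card S = d} = {S. S \<subseteq> {..<Nt} \<and> card S = d}"
      using d by auto
    have "(\<Sum>S\<in>{S. S \<in> ?P \<and> card S = d}. f (card S)) = (\<Sum>S\<in>{S. S \<subseteq> {..<Nt} \<and> card S = d}. f d)"
      unfolding eq by (rule sum.cong) auto
    also have "\<dots> = real (Nt choose d) * f d"
      using n_subsets[of "{..<Nt}" d] by simp
    finally show "(\<Sum>S\<in>{S. S \<in> ?P \<and> card S = d}. f (card S)) = real (Nt choose d) * f d" .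
  qed
  finally show ?thesis .
qed

lemma vdist_nonneg: "0 \<le> vdist Nr u v" by (simp add: vdist_def sum_nonneg)

lemma vdist_zero_iff: "vdist Nr u v = 0 \<longleftrightarrow> (\<forall>i<Nr. u i = v i)"
proof -
  have "vdist Nr u v = 0 \<longleftrightarrow> (\<Sum>i<Nr. (cmod (u i - v i))\<^sup>2) = 0" by (simp add: vdist_def)
  also have "\<dots> \<longleftrightarrow> (\<forall>i\<in>{..<Nr}. (cmod (u i - v i))\<^sup>2 = 0)" by (rule sum_nonneg_eq_0_iff) auto
  finally show ?thesis by auto
qed

lemma minimizers_eq:
  assumes x: "x \<in> bpsk_set Nt"
  shows "minimizers Nr Nt H (onebit_out Nr Nt H x) =
    {m \<in> bpsk_set Nt. \<forall>i<Nr. onebit_out Nr Nt H x i = onebit_out Nr Nt H m i}"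
proof -
  have z: "vdist Nr (onebit_out Nr Nt H x) (onebit_out Nr Nt H x) = 0" by (simp add: vdist_zero_iff)
  show ?thesis
  proof (intro equalityI subsetI)
    fix m assume m: "m \<in> minimizers Nr Nt H (onebit_out Nr Nt H x)"
    then have "vdist Nr (onebit_out Nr Nt H x) (onebit_out Nr Nt H m) \<le> 0"
      using x z unfolding minimizers_def by force
    then have "vdist Nr (onebit_out Nr Nt H x) (onebit_out Nr Nt H m) = 0" using vdist_nonneg by (metis antisym)
    then show "m \<in> {m \<in> bpsk_set Nt. \<forall>i<Nr. onebit_out Nr Nt H x i = onebit_out Nr Nt H m i}"
      using m unfolding minimizers_def vdist_zero_iff by auto
  next
    fix m assume "m \<in> {m \<in> bpsk_set Nt. \<forall>i<Nr. onebit_out Nr Nt H x i = onebit_out Nr Nt H m i}"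
    then have "m \<in> bpsk_set Nt" "vdist Nr (onebit_out Nr Nt H x) (onebit_out Nr Nt H m) = 0"
      by (auto simp: vdist_zero_iff)
    then show "m \<in> minimizers Nr Nt H (onebit_out Nr Nt H x)"
      unfolding minimizers_def using vdist_nonneg by auto
  qed
qed

lemma cond_err_le:
  assumes fin: "finite (bpsk_set Nt)" and x: "x \<in> bpsk_set Nt"
  shows "cond_err Nr Nt H x \<le> (1/2) * real (card {m \<in> bpsk_set Nt - {x}. \<forall>i<Nr. onebit_out Nr Nt H x i = onebit_out Nr Nt H m i})"
proof -
  let ?C = "{m \<in> bpsk_set Nt - {x}. \<forall>i<Nr. onebit_out Nr Nt H x i = onebit_out Nr Nt H m i}"
  let ?A = "minimizers Nr Nt H (onebit_out Nr Nt H x)"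
  have A: "?A = insert x ?C" unfolding minimizers_eq[OF x] using x by auto
  have finC: "finite ?C" using fin by auto
  have cA: "card ?A = Suc (card ?C)" unfolding A using finC by simp
  have xA: "x \<in> ?A" unfolding A by simp
  define n where "n = card ?C"
  have "cond_err Nr Nt H x = 1 - 1 / real (Suc n)"
    unfolding cond_err_def Let_def using xA cA n_def by simp
  also have "\<dots> \<le> (1/2) * real n"
  proof (cases "n = 0")
    case False
    then have "real n \<ge> 1" by simp
    then show ?thesis by (simp add: field_simps)
  qed simp
  finally show ?thesis unfolding n_def .
qed



lemma bpsk_finite: "finite (bpsk_set Nt)" and bpsk_ne: "bpsk_set Nt \<noteq> {}"
proof -
  let ?x0 = "\<lambda>j. if j < Nt then 1 else (0::real)"
  have x0: "?x0 \<in> bpsk_set Nt" by (simp add: bpsk_set_def)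
  have "finite (bpsk_set Nt - {?x0})"
    using bij_betw_finite[OF diff_bij[OF x0]] by simp
  then show "finite (bpsk_set Nt)" by simp
  show "bpsk_set Nt \<noteq> {}" using x0 by auto
qed

lemma ennreal_sum2:
  assumes "\<And>x m. x \<in> A \<Longrightarrow> m \<in> B x \<Longrightarrow> 0 \<le> f x m"
  shows "ennreal (\<Sum>x\<in>A. \<Sum>m\<in>B x. f x m) = (\<Sum>x\<in>A. \<Sum>m\<in>B x. ennreal (f x m))"
proof -
  have "ennreal (\<Sum>x\<in>A. \<Sum>m\<in>B x. f x m) = (\<Sum>x\<in>A. ennreal (\<Sum>m\<in>B x. f x m))"
    by (rule sum_ennreal[symmetric]) (auto intro: sum_nonneg assms)
  also have "\<dots> = (\<Sum>x\<in>A. \<Sum>m\<in>B x. ennreal (f x m))"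
    by (intro sum.cong refl sum_ennreal[symmetric]) (auto intro: assms)
  finally show ?thesis .
qed

theorem proposition4:
  fixes Nt Nr :: nat
  assumes "Nt \<ge> 1" and "Nr \<ge> 1"
  shows "P_ver_inf Nr Nt \<le> ennreal ((1/2) * (\<Sum>d=1..Nt. real (Nt choose d) *
           ((2 / pi) * arctan (sqrt ((real Nt - real d) / real d))) ^ (2 * Nr)))"
proof -
  let ?B = "bpsk_set Nt"
  let ?M = "chan_measure Nr Nt"
  define K where "K = real (card ?B)"
  define c where "c = 1 / (2 * K)"
  define q where "q = (\<lambda>d::nat. ((2 / pi) * arctan (sqrt ((real Nt - real d) / real d))) ^ (2 * Nr))"
  define dd where "dd = (\<lambda>x m. card {j. j < Nt \<and> x j \<noteq> (m::nat\<Rightarrow>real) j})"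
  have Kpos: "K > 0" unfolding K_def using bpsk_finite bpsk_ne by (simp add: card_gt_0_iff)
  have c0: "c \<ge> 0" unfolding c_def using Kpos by simp
  have q0: "q d \<ge> 0" if "d \<le> Nt" for d
  proof -
    have "0 \<le> sqrt ((real Nt - real d) / real d)" using that by simp
    then have "0 \<le> arctan (sqrt ((real Nt - real d) / real d))" using arctan_le_iff[of 0] by simp
    then show ?thesis unfolding q_def by simp
  qed
  have dd_le: "dd x m \<le> Nt" for x m
  proof -
    have "card {j. j < Nt \<and> x j \<noteq> m j} \<le> card {..<Nt}" by (rule card_mono) auto
    then show ?thesis unfolding dd_def by simp
  qed
  have EvS: "Ev Nr Nt x m \<in> sets ?M" for x m by (rule Ev_sets[OF assms(2)])
  have pw: "ennreal ((1 / real (card ?B)) * (\<Sum>x\<in>?B. cond_err Nr Nt H x))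
      \<le> (\<Sum>x\<in>?B. \<Sum>m\<in>?B - {x}. ennreal c * indicator (Ev Nr Nt x m) H)" if H: "H \<in> space ?M" for H
  proof -
    have card_eq: "real (card {m \<in> ?B - {x}. \<forall>i<Nr. onebit_out Nr Nt H x i = onebit_out Nr Nt H m i})
        = (\<Sum>m\<in>?B - {x}. indicator (Ev Nr Nt x m) H)" for x
    proof -
      have "(\<Sum>m\<in>?B - {x}. indicator (Ev Nr Nt x m) H :: real)
          = (\<Sum>m\<in>?B - {x}. if (\<forall>i<Nr. onebit_out Nr Nt H x i = onebit_out Nr Nt H m i) then 1 else 0)"
        by (intro sum.cong) (use H in \<open>auto simp: Ev_def indicator_def\<close>)
      also have "\<dots> = real (card {m \<in> ?B - {x}. \<forall>i<Nr. onebit_out Nr Nt H x i = onebit_out Nr Nt H m i})"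
        by (simp add: sum.inter_filter[symmetric] bpsk_finite)
      finally show ?thesis by simp
    qed
    have "(1 / real (card ?B)) * (\<Sum>x\<in>?B. cond_err Nr Nt H x)
        \<le> (1 / K) * (\<Sum>x\<in>?B. (1/2) * (\<Sum>m\<in>?B - {x}. indicator (Ev Nr Nt x m) H))"
      unfolding K_def card_eq[symmetric] using Kpos[unfolded K_def]
      by (intro mult_left_mono sum_mono cond_err_le bpsk_finite) auto
    also have "\<dots> = (\<Sum>x\<in>?B. \<Sum>m\<in>?B - {x}. c * indicator (Ev Nr Nt x m) H)"
      unfolding c_def by (simp add: sum_distrib_left algebra_simps)
    finally have "ennreal ((1 / real (card ?B)) * (\<Sum>x\<in>?B. cond_err Nr Nt H x))
        \<le> ennreal (\<Sum>x\<in>?B. \<Sum>m\<in>?B - {x}. c * indicator (Ev Nr Nt x m) H)"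
      by (rule ennreal_leI)
    also have "\<dots> = (\<Sum>x\<in>?B. \<Sum>m\<in>?B - {x}. ennreal c * indicator (Ev Nr Nt x m) H)"
      using c0 by (simp add: ennreal_sum2 ennreal_mult ennreal_indicator)
    finally show ?thesis .
  qed
  have "P_ver_inf Nr Nt \<le> (\<integral>\<^sup>+H. (\<Sum>x\<in>?B. \<Sum>m\<in>?B - {x}. ennreal c * indicator (Ev Nr Nt x m) H) \<partial>?M)"
    unfolding P_ver_inf_def by (rule nn_integral_mono) (rule pw)
  also have "\<dots> = (\<Sum>x\<in>?B. \<Sum>m\<in>?B - {x}. ennreal c * emeasure ?M (Ev Nr Nt x m))"
    using EvS by (simp add: nn_integral_sum nn_integral_cmult_indicator)
  also have "\<dots> \<le> (\<Sum>x\<in>?B. \<Sum>m\<in>?B - {x}. ennreal c * ennreal (q (dd x m)))"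
  proof (intro sum_mono mult_left_mono)
    fix x m assume x: "x \<in> ?B" and m: "m \<in> ?B - {x}"
    show "emeasure ?M (Ev Nr Nt x m) \<le> ennreal (q (dd x m))"
      unfolding q_def dd_def by (rule Ev_bound[OF assms(2) assms(1) x]) (use m in auto)
  qed simp
  also have "\<dots> = ennreal (\<Sum>x\<in>?B. \<Sum>m\<in>?B - {x}. c * q (dd x m))"
    using c0 q0 dd_le by (simp add: ennreal_sum2 ennreal_mult)
  also have "(\<Sum>x\<in>?B. \<Sum>m\<in>?B - {x}. c * q (dd x m)) = (\<Sum>x\<in>?B. c * (\<Sum>d=1..Nt. real (Nt choose d) * q d))"
  proof (rule sum.cong[OF refl])
    fix x assume x: "x \<in> ?B"
    show "(\<Sum>m\<in>?B - {x}. c * q (dd x m)) = c * (\<Sum>d=1..Nt. real (Nt choose d) * q d)"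
      unfolding sum_distrib_left[symmetric] dd_def by (rule arg_cong[where f="(*) c"], rule count_sum[OF x])
  qed
  also have "\<dots> = (1/2) * (\<Sum>d=1..Nt. real (Nt choose d) * q d)"
    using Kpos unfolding c_def K_def by simp
  finally show ?thesis unfolding q_def .
qed

end
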